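(* Let $A$ be an invertible square rational matrix. Then $A$ is totally equimodular if and only if $(A^{-1})^\top$ is totally equimodular.
   Context: An $m\times n$ matrix is equimodular if it has full row rank $m$ and all its nonzero $m\times m$ minors have the same absolute value. A matrix is totally equimodular if every set of linearly independent rows of it forms an equimodular matrix. *)

theory Defs
  imports "Jordan_Normal_Form.DL_Submatrix" "Jordan_Normal_Form.Determinant"
begin

definition rows_lin_indep :: "rat mat \<Rightarrow> nat set \<Rightarrow> bool" where
  "rows_lin_indep M I \<longleftrightarrow> I \<subseteq> {..<dim_row M} \<and>
     (\<forall>c :: nat \<Rightarrow> rat. (\<forall>j<dim_col M. (\<Sum>i\<in>I. c i * M $$ (i, j)) = 0) \<longrightarrow> (\<forall>i\<in>I. c i = 0))"

definition equimodular :: "rat mat \<Rightarrow> bool" where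
  "equimodular M \<longleftrightarrow> rows_lin_indep M {..<dim_row M} \<and>
     (\<forall>J K. J \<subseteq> {..<dim_col M} \<and> K \<subseteq> {..<dim_col M} \<and>
            card J = dim_row M \<and> card K = dim_row M \<and>
            det (submatrix M UNIV J) \<noteq> 0 \<and> det (submatrix M UNIV K) \<noteq> 0 \<longrightarrow>
            \<bar>det (submatrix M UNIV J)\<bar> = \<bar>det (submatrix M UNIV K)\<bar>)"

definition totally_equimodular :: "rat mat \<Rightarrow> bool" where
  "totally_equimodular M \<longleftrightarrow>
     (\<forall>I. rows_lin_indep M I \<longrightarrow> equimodular (submatrix M I UNIV))"

end

theory Submission
  imports Defs
begin

lemma abs_signof: "\<bar>(signof p :: rat)\<bar> = 1"
  by (simp add: sign_def)

lemma pick_inj: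
  assumes "m < card S" "m' < card S"
  shows "pick S m = pick S m' \<longleftrightarrow> m = m'"
  using pick_mono[of m' S m] pick_mono[of m S m'] assms
  by (metis less_irrefl linorder_neqE_nat)

lemma det_permute_cols:
  assumes A: "A \<in> carrier_mat n n" and p: "p permutes {0..<n}"
  shows "det (mat n n (\<lambda>(i,j). A $$ (i, p j))) = signof p * det A"
proof -
  have pn: "\<And>j. j < n \<Longrightarrow> p j < n" using p by (simp add: permutes_in_image)
  have "mat n n (\<lambda>(i,j). A $$ (i, p j)) = transpose_mat (mat n n (\<lambda>(i,j). transpose_mat A $$ (p i, j)))"
    using A pn by (auto intro!: eq_matI)
  hence "det (mat n n (\<lambda>(i,j). A $$ (i, p j))) = det (mat n n (\<lambda>(i,j). transpose_mat A $$ (p i, j)))"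
    by (metis det_transpose mat_carrier)
  also have "\<dots> = signof p * det (transpose_mat A)"
    by (rule det_permute_rows[OF _ p], use A in simp)
  also have "\<dots> = signof p * det A" using A by (simp add: det_transpose)
  finally show ?thesis .
qed

definition split_perm :: "nat \<Rightarrow> nat set \<Rightarrow> nat \<Rightarrow> nat" where
  "split_perm n I r = (if r < card I then pick I r else if r < n then pick ({..<n} - I) (r - card I) else r)"

lemma card_compl: "I \<subseteq> {..<n} \<Longrightarrow> card ({..<n} - I) = n - card I"
  by (simp add: card_Diff_subset finite_subset)

lemma split_perm_permutes:
  assumes I: "I \<subseteq> {..<n}"
  shows "split_perm n I permutes {0..<n}"
proof -
  let ?k = "card I" and ?Ic = "{..<n} - I"
  have ck: "?k \<le> n" using I by (metis card_lessThan card_mono finite_lessThan)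
  have cIc: "card ?Ic = n - ?k" using card_compl[OF I] .
  have img: "split_perm n I r < n" if "r < n" for r
  proof (cases "r < ?k")
    case True then show ?thesis using pick_in_set[of r I] I by (auto simp: split_perm_def)
  next
    case False
    then have "r - ?k < card ?Ic" using cIc that by simp
    then show ?thesis using pick_in_set[of "r - ?k" ?Ic] False that by (auto simp: split_perm_def)
  qed
  have inj: "inj_on (split_perm n I) {0..<n}"
  proof (rule inj_onI)
    fix x y assume x: "x \<in> {0..<n}" and y: "y \<in> {0..<n}" and e: "split_perm n I x = split_perm n I y"
    show "x = y"
    proof (cases "x < ?k"; cases "y < ?k")
      assume "x < ?k" "y < ?k" then show ?thesis using e pick_inj[of x I y] by (simp add: split_perm_def)
    next
      assume a: "x < ?k" "\<not> y < ?k"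
      then have "y - ?k < card ?Ic" using cIc y by simp
      then have "pick ?Ic (y - ?k) \<in> ?Ic" by (rule pick_in_set[OF disjI1])
      moreover have "pick I x \<in> I" using a pick_in_set by blast
      ultimately show ?thesis using e a y by (simp add: split_perm_def)
    next
      assume a: "\<not> x < ?k" "y < ?k"
      then have "x - ?k < card ?Ic" using cIc x by simp
      then have "pick ?Ic (x - ?k) \<in> ?Ic" by (rule pick_in_set[OF disjI1])
      moreover have "pick I y \<in> I" using a pick_in_set by blast
      ultimately show ?thesis using e a x by (simp add: split_perm_def)
    next
      assume a: "\<not> x < ?k" "\<not> y < ?k"
      then have "x - ?k < card ?Ic" "y - ?k < card ?Ic" using cIc x y by simp_all
      then have "x - ?k = y - ?k" using e a x y pick_inj[of "x - ?k" ?Ic "y - ?k"] by (simp add: split_perm_def)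
      then show ?thesis using a by simp
    qed
  qed
  have "split_perm n I ` {0..<n} = {0..<n}"
    by (rule endo_inj_surj, simp, use img in auto, rule inj)
  then have "bij_betw (split_perm n I) {0..<n} {0..<n}" using inj by (simp add: bij_betw_def)
  then show ?thesis by (rule bij_imp_permutes, use ck in \<open>auto simp add: split_perm_def\<close>)
qed

lemma set_lt_eq: "I \<subseteq> {..<n} \<Longrightarrow> {i. i < n \<and> i \<in> I} = I" by auto

lemma unit_cols_det:
  fixes M :: "rat mat"
  assumes M: "M \<in> carrier_mat n n" and I: "I \<subseteq> {..<n}" and J: "J \<subseteq> {..<n}"
    and c: "card I = card J"
    and unit: "\<And>i j. i < n \<Longrightarrow> j < n \<Longrightarrow> j \<notin> J \<Longrightarrow>
        M $$ (i,j) = (if i = pick ({..<n} - I) (card {a \<in> {..<n} - J. a < j}) then 1 else 0)"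
  shows "\<bar>det M\<bar> = \<bar>det (submatrix M I J)\<bar>"
proof -
  define k where "k = card I"
  define Ic where "Ic = {..<n} - I"
  define Jc where "Jc = {..<n} - J"
  define \<sigma> where "\<sigma> = split_perm n I"
  define \<tau> where "\<tau> = split_perm n J"
  have ck: "k \<le> n" unfolding k_def using I by (metis card_lessThan card_mono finite_lessThan)
  have cIc: "card Ic = n - k" unfolding Ic_def k_def using card_compl[OF I] .
  have cJc: "card Jc = n - k" unfolding Jc_def k_def c using card_compl[OF J] .
  have sp: "\<sigma> permutes {0..<n}" unfolding \<sigma>_def by (rule split_perm_permutes[OF I])
  have tp: "\<tau> permutes {0..<n}" unfolding \<tau>_def by (rule split_perm_permutes[OF J])
  have tn: "\<And>j. j < n \<Longrightarrow> \<tau> j < n" using tp by (simp add: permutes_in_image)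
  define M1 where "M1 = mat n n (\<lambda>(i,j). M $$ (\<sigma> i, j))"
  define M2 where "M2 = mat n n (\<lambda>(i,j). M1 $$ (i, \<tau> j))"
  have M1c: "M1 \<in> carrier_mat n n" unfolding M1_def by simp
  have d1: "det M1 = signof \<sigma> * det M" unfolding M1_def by (rule det_permute_rows[OF M sp])
  have d2: "det M2 = signof \<tau> * det M1" unfolding M2_def by (rule det_permute_cols[OF M1c tp])
  define S where "S = submatrix M I J"
  have SI: "{i. i < dim_row M \<and> i \<in> I} = I" using M I by auto
  have SJ: "{i. i < dim_col M \<and> i \<in> J} = J" using M J by auto
  have Sc: "S \<in> carrier_mat k k" unfolding S_def carrier_mat_def using SI SJ c by (simp add: k_def dim_submatrix)
  define Y where "Y = mat (n-k) k (\<lambda>(a,b). M $$ (pick Ic a, pick J b))"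
  have eq: "M2 = four_block_mat S (0\<^sub>m k (n-k)) Y (1\<^sub>m (n-k))"
  proof (rule eq_matI)
    show "dim_row M2 = dim_row (four_block_mat S (0\<^sub>m k (n - k)) Y (1\<^sub>m (n - k)))"
      using Sc ck by (simp add: M2_def)
    show "dim_col M2 = dim_col (four_block_mat S (0\<^sub>m k (n - k)) Y (1\<^sub>m (n - k)))"
      using Sc ck by (simp add: M2_def)
    fix r c' assume r: "r < dim_row (four_block_mat S (0\<^sub>m k (n - k)) Y (1\<^sub>m (n - k)))"
      and cc: "c' < dim_col (four_block_mat S (0\<^sub>m k (n - k)) Y (1\<^sub>m (n - k)))"
    have rn: "r < n" and cn: "c' < n" using r cc Sc ck by auto
    have M2e: "M2 $$ (r,c') = M $$ (\<sigma> r, \<tau> c')" unfolding M2_def M1_def using rn cn tn by simp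
    have FB: "four_block_mat S (0\<^sub>m k (n - k)) Y (1\<^sub>m (n - k)) $$ (r,c') =
      (if r < k then if c' < k then S $$ (r,c') else 0 else if c' < k then Y $$ (r - k, c') else 1\<^sub>m (n-k) $$ (r - k, c' - k))"
      using rn cn Sc ck by (auto simp: Y_def)
    show "M2 $$ (r,c') = four_block_mat S (0\<^sub>m k (n - k)) Y (1\<^sub>m (n - k)) $$ (r,c')"
      unfolding M2e FB
    proof (cases "r < k"; cases "c' < k")
      assume a: "r < k" "c' < k"
      have "S $$ (r,c') = M $$ (pick I r, pick J c')" unfolding S_def
        by (rule submatrix_index, unfold SI SJ, use a k_def c in auto)
      then show "M $$ (\<sigma> r, \<tau> c') = (if r < k then if c' < k then S $$ (r, c') else 0 else if c' < k then Y $$ (r - k, c') else 1\<^sub>m (n - k) $$ (r - k, c' - k))"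
        using a by (simp add: \<sigma>_def \<tau>_def split_perm_def k_def c)
    next
      assume a: "r < k" "\<not> c' < k"
      have ck': "c' - k < card Jc" using cJc a cn by simp
      have pj: "pick Jc (c' - k) \<in> Jc" by (rule pick_in_set, use ck' in simp)
      have cp: "card {a \<in> Jc. a < pick Jc (c' - k)} = c' - k" by (rule card_pick, use ck' in simp)
      have pic: "pick Ic (c' - k) \<in> Ic" by (rule pick_in_set, use ck' cIc cJc in simp)
      have pI: "pick I r \<in> I" by (rule pick_in_set, use a k_def in simp)
      have "M $$ (pick I r, pick Jc (c' - k)) = 0"
      proof -
        have pIn: "pick I r < n" using pI I by auto
        show ?thesis using unit[of "pick I r" "pick Jc (c' - k)"] pj pI pic pIn cp
          by (auto simp: Jc_def Ic_def)
      qed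
      then show "M $$ (\<sigma> r, \<tau> c') = (if r < k then if c' < k then S $$ (r, c') else 0 else if c' < k then Y $$ (r - k, c') else 1\<^sub>m (n - k) $$ (r - k, c' - k))"
        using a cn by (simp add: \<sigma>_def \<tau>_def split_perm_def k_def c Jc_def)
    next
      assume a: "\<not> r < k" "c' < k"
      then show "M $$ (\<sigma> r, \<tau> c') = (if r < k then if c' < k then S $$ (r, c') else 0 else if c' < k then Y $$ (r - k, c') else 1\<^sub>m (n - k) $$ (r - k, c' - k))"
        using rn by (simp add: \<sigma>_def \<tau>_def split_perm_def k_def c Y_def Ic_def)
    next
      assume a: "\<not> r < k" "\<not> c' < k"
      have ck': "c' - k < card Jc" using cJc a cn by simp
      have rk': "r - k < card Ic" using cIc a rn by simp
      have pj: "pick Jc (c' - k) \<in> Jc" by (rule pick_in_set, use ck' in simp)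
      have cp: "card {a \<in> Jc. a < pick Jc (c' - k)} = c' - k" by (rule card_pick, use ck' in simp)
      have pr: "pick Ic (r - k) \<in> Ic" by (rule pick_in_set, use rk' in simp)
      have "M $$ (pick Ic (r - k), pick Jc (c' - k)) = (if pick Ic (r - k) = pick Ic (c' - k) then 1 else 0)"
        using unit[of "pick Ic (r - k)" "pick Jc (c' - k)"] pj pr cp
        by (auto simp: Jc_def Ic_def)
      also have "\<dots> = (if r - k = c' - k then 1 else 0)"
        using pick_inj[of "r - k" Ic "c' - k"] rk' ck' cIc cJc by simp
      finally show "M $$ (\<sigma> r, \<tau> c') = (if r < k then if c' < k then S $$ (r, c') else 0 else if c' < k then Y $$ (r - k, c') else 1\<^sub>m (n - k) $$ (r - k, c' - k))"
        using a cn rn by (simp add: \<sigma>_def \<tau>_def split_perm_def k_def c Jc_def Ic_def)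
    qed
  qed
  have "det M2 = det S * det (1\<^sub>m (n-k) :: rat mat)"
    unfolding eq by (rule det_four_block_mat_upper_right_zero[OF Sc refl], auto simp: Y_def)
  then have "det M2 = det S" by simp
  then have "det S = signof \<tau> * (signof \<sigma> * det M)" using d1 d2 by simp
  then have "\<bar>det S\<bar> = \<bar>det M\<bar>" by (simp add: abs_mult abs_signof)
  then show ?thesis by (simp add: S_def)
qed

lemma jacobi_abs:
  fixes A B :: "rat mat"
  assumes A: "A \<in> carrier_mat n n" and B: "B \<in> carrier_mat n n" and AB: "A * B = 1\<^sub>m n"
    and I: "I \<subseteq> {..<n}" and J: "J \<subseteq> {..<n}" and c: "card I = card J"
  shows "\<bar>det (submatrix A I J)\<bar> = \<bar>det A\<bar> * \<bar>det (submatrix B ({..<n} - J) ({..<n} - I))\<bar>"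
proof -
  define Ic where "Ic = {..<n} - I"
  define Jc where "Jc = {..<n} - J"
  have cc: "card Ic = card Jc" unfolding Ic_def Jc_def using card_compl[OF I] card_compl[OF J] c by simp
  have rk: "card {a \<in> Jc. a < j} < card Jc" if "j < n" "j \<notin> J" for j
  proof -
    have "{a \<in> Jc. a < j} \<subset> Jc" using that by (auto simp: Jc_def)
    then show ?thesis by (rule psubset_card_mono[rotated], simp add: Jc_def)
  qed
  have pIc: "pick Ic (card {a \<in> Jc. a < j}) \<in> Ic" if "j < n" "j \<notin> J" for j
    by (rule pick_in_set, use rk[OF that] cc in simp)
  define P where "P = mat n n (\<lambda>(i,j). if j \<in> J then (if i = j then 1 else 0)
      else B $$ (i, pick Ic (card {a \<in> Jc. a < j})))"
  have Pc: "P \<in> carrier_mat n n" unfolding P_def by simp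
  have APc: "A * P \<in> carrier_mat n n" using A Pc by simp
  have AP: "(A * P) $$ (i,j) = (if j \<in> J then A $$ (i,j) else
        (if i = pick Ic (card {a \<in> Jc. a < j}) then 1 else 0))" if ij: "i < n" "j < n" for i j
  proof (cases "j \<in> J")
    case True
    have "(A * P) $$ (i,j) = (\<Sum>k\<in>{0..<n}. A $$ (i,k) * (if k = j then 1 else 0))"
      using A Pc ij True by (simp add: scalar_prod_def P_def)
    also have "\<dots> = A $$ (i,j)" using ij by (simp add: if_distrib cong: if_cong)
    finally show ?thesis using True by simp
  next
    case False
    define p where "p = pick Ic (card {a \<in> Jc. a < j})"
    have pn: "p < n" using pIc[OF ij(2) False] by (simp add: p_def Ic_def)
    have "(A * P) $$ (i,j) = (\<Sum>k\<in>{0..<n}. A $$ (i,k) * B $$ (k, p))"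
      using A Pc ij False by (simp add: scalar_prod_def P_def p_def)
    also have "\<dots> = (A * B) $$ (i, p)"
      using A B ij pn by (simp add: scalar_prod_def)
    also have "\<dots> = (if i = p then 1 else 0)" using AB ij pn by simp
    finally show ?thesis using False by (simp add: p_def)
  qed
  have SI: "\<And>M :: rat mat. M \<in> carrier_mat n n \<Longrightarrow> X \<subseteq> {..<n} \<Longrightarrow> {i. i < dim_row M \<and> i \<in> X} = X"
    and SJ: "\<And>M :: rat mat. M \<in> carrier_mat n n \<Longrightarrow> X \<subseteq> {..<n} \<Longrightarrow> {i. i < dim_col M \<and> i \<in> X} = X" for X
    by auto
  have Jc_sub: "Jc \<subseteq> {..<n}" and Ic_sub: "Ic \<subseteq> {..<n}" by (auto simp: Jc_def Ic_def)
  have e1: "\<bar>det (A * P)\<bar> = \<bar>det (submatrix (A * P) I J)\<bar>"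
    by (rule unit_cols_det[OF APc I J c], use AP in \<open>auto simp: Ic_def Jc_def\<close>)
  have e2: "submatrix (A * P) I J = submatrix A I J"
  proof (rule eq_matI)
    show "dim_row (submatrix (A * P) I J) = dim_row (submatrix A I J)"
      using A APc by (simp add: dim_submatrix)
    show "dim_col (submatrix (A * P) I J) = dim_col (submatrix A I J)"
      using A APc Pc by (simp add: dim_submatrix)
    fix i j assume i: "i < dim_row (submatrix A I J)" and j: "j < dim_col (submatrix A I J)"
    have i': "i < card I" and j': "j < card J" using i j SI[OF A I] SJ[OF A J] by (simp_all add: dim_submatrix)
    have pi: "pick I i \<in> I" by (rule pick_in_set, use i' in simp)
    have pj: "pick J j \<in> J" by (rule pick_in_set, use j' in simp)
    show "submatrix (A * P) I J $$ (i, j) = submatrix A I J $$ (i, j)"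
      using submatrix_index[of i "A * P" I j J] submatrix_index[of i A I j J] i' j'
        SI[OF A I] SJ[OF A J] SI[OF APc I] SJ[OF APc J] AP[of "pick I i" "pick J j"] pi pj subsetD[OF I pi] subsetD[OF J pj]
      by auto
  qed
  have JJ: "{..<n} - Jc = J" using J by (auto simp: Jc_def)
  have e3: "\<bar>det P\<bar> = \<bar>det (submatrix P Jc Jc)\<bar>"
  proof (rule unit_cols_det[OF Pc Jc_sub Jc_sub refl])
    fix i j assume ij: "i < n" "j < n" "j \<notin> Jc"
    then have jJ: "j \<in> J" by (simp add: Jc_def)
    show "P $$ (i, j) = (if i = pick ({..<n} - Jc) (card {a \<in> {..<n} - Jc. a < j}) then 1 else 0)"
      unfolding JJ pick_card_in_set[OF jJ] using ij jJ by (simp add: P_def)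
  qed
  have e4: "submatrix P Jc Jc = submatrix B Jc Ic"
  proof (rule eq_matI)
    show "dim_row (submatrix P Jc Jc) = dim_row (submatrix B Jc Ic)"
      using B Pc by (simp add: dim_submatrix)
    show "dim_col (submatrix P Jc Jc) = dim_col (submatrix B Jc Ic)"
      using SJ[OF B Ic_sub] SJ[OF Pc Jc_sub] cc by (simp add: dim_submatrix)
    fix i j assume i: "i < dim_row (submatrix B Jc Ic)" and j: "j < dim_col (submatrix B Jc Ic)"
    have i': "i < card Jc" and j': "j < card Ic" using i j SI[OF B Jc_sub] SJ[OF B Ic_sub] by (simp_all add: dim_submatrix)
    have j'': "j < card Jc" using j' cc by simp
    have pi: "pick Jc i \<in> Jc" by (rule pick_in_set, use i' in simp)
    have pj: "pick Jc j \<in> Jc" by (rule pick_in_set, use j'' in simp)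
    have cp: "card {a \<in> Jc. a < pick Jc j} = j" by (rule card_pick, use j'' in simp)
    have "submatrix P Jc Jc $$ (i, j) = P $$ (pick Jc i, pick Jc j)"
      by (rule submatrix_index, use SI[OF Pc Jc_sub] SJ[OF Pc Jc_sub] i' j'' in auto)
    also have "\<dots> = B $$ (pick Jc i, pick Ic j)" using pi pj cp by (auto simp: P_def Jc_def)
    also have "\<dots> = submatrix B Jc Ic $$ (i, j)"
      by (rule submatrix_index[symmetric], use SI[OF B Jc_sub] SJ[OF B Ic_sub] i' j' in auto)
    finally show "submatrix P Jc Jc $$ (i, j) = submatrix B Jc Ic $$ (i, j)" .
  qed
  have "det (A * P) = det A * det P" by (rule det_mult[OF A Pc])
  then show ?thesis using e1 e2 e3 e4 by (simp add: abs_mult Ic_def Jc_def)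
qed

lemma rows_indep_inv:
  fixes X Y :: "rat mat"
  assumes X: "X \<in> carrier_mat n n" and Y: "Y \<in> carrier_mat n n" and XY: "X * Y = 1\<^sub>m n"
  shows "rows_lin_indep X I \<longleftrightarrow> I \<subseteq> {..<n}"
proof
  assume "rows_lin_indep X I" then show "I \<subseteq> {..<n}" using X by (simp add: rows_lin_indep_def)
next
  assume I: "I \<subseteq> {..<n}"
  have fI: "finite I" using I finite_subset by blast
  show "rows_lin_indep X I" unfolding rows_lin_indep_def
  proof (intro conjI allI impI ballI)
    show "I \<subseteq> {..<dim_row X}" using I X by simp
    fix c :: "nat \<Rightarrow> rat" and l
    assume z: "\<forall>j<dim_col X. (\<Sum>i\<in>I. c i * X $$ (i, j)) = 0" and l: "l \<in> I"
    have ln: "l < n" using l I by auto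
    have "(\<Sum>i\<in>I. c i * (X * Y) $$ (i, l)) = (\<Sum>i\<in>I. if i = l then c i else 0)"
      using XY I ln by (intro sum.cong refl, auto)
    also have "\<dots> = c l" using l fI by simp
    finally have "c l = (\<Sum>i\<in>I. c i * (X * Y) $$ (i, l))" by simp
    also have "\<dots> = (\<Sum>i\<in>I. \<Sum>j\<in>{0..<n}. c i * X $$ (i,j) * Y $$ (j,l))"
    proof (rule sum.cong[OF refl])
      fix i assume "i \<in> I" then have "i < n" using I by auto
      then show "c i * (X * Y) $$ (i, l) = (\<Sum>j\<in>{0..<n}. c i * X $$ (i,j) * Y $$ (j,l))"
        using X Y ln by (simp add: scalar_prod_def sum_distrib_left mult.assoc)
    qed
    also have "\<dots> = (\<Sum>j\<in>{0..<n}. (\<Sum>i\<in>I. c i * X $$ (i,j)) * Y $$ (j,l))"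
      by (subst sum.swap, simp add: sum_distrib_right)
    also have "\<dots> = 0" using z X by simp
    finally show "c l = 0" .
  qed
qed

lemma pick_image:
  assumes f: "finite I"
  shows "pick I ` {..<card I} = I"
proof -
  have sub: "pick I ` {..<card I} \<subseteq> I" using pick_in_set by auto
  have inj: "inj_on (pick I) {..<card I}" by (rule inj_onI, use pick_inj in auto)
  have "card (pick I ` {..<card I}) = card I" using card_image[OF inj] by simp
  then show ?thesis using card_subset_eq[OF f sub] by simp
qed

lemma submatrix_rows_indep:
  fixes X Y :: "rat mat"
  assumes X: "X \<in> carrier_mat n n" and Y: "Y \<in> carrier_mat n n" and XY: "X * Y = 1\<^sub>m n"
    and I: "I \<subseteq> {..<n}"
  shows "rows_lin_indep (submatrix X I UNIV) {..<dim_row (submatrix X I UNIV)}"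
proof -
  have fI: "finite I" using I finite_subset by blast
  have SI: "{i. i < dim_row X \<and> i \<in> I} = I" using X I by auto
  have SU: "{j. j < dim_col X \<and> j \<in> UNIV} = {..<n}" using X by auto
  have dr: "dim_row (submatrix X I UNIV) = card I" using SI by (simp add: dim_submatrix)
  have dc: "dim_col (submatrix X I UNIV) = n" using SU by (simp add: dim_submatrix)
  have ent: "submatrix X I UNIV $$ (r, j) = X $$ (pick I r, j)" if "r < card I" "j < n" for r j
    using submatrix_index[of r X I j UNIV] SI SU that X by (simp add: pick_UNIV)
  have inj: "inj_on (pick I) {..<card I}" by (rule inj_onI, use pick_inj in auto)
  show ?thesis unfolding rows_lin_indep_def dr dc
  proof (intro conjI allI impI ballI)
    show "{..<card I} \<subseteq> {..<card I}" by simp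
    fix c :: "nat \<Rightarrow> rat" and l
    assume z: "\<forall>j<n. (\<Sum>i\<in>{..<card I}. c i * submatrix X I UNIV $$ (i, j)) = 0" and l: "l \<in> {..<card I}"
    define c' where "c' i = c (card {a \<in> I. a < i})" for i
    have "\<forall>j<dim_col X. (\<Sum>i\<in>I. c' i * X $$ (i, j)) = 0"
    proof (intro allI impI)
      fix j assume j: "j < dim_col X"
      have "(\<Sum>i\<in>I. c' i * X $$ (i, j)) = (\<Sum>r\<in>{..<card I}. c' (pick I r) * X $$ (pick I r, j))"
        using sum.reindex[OF inj, of "\<lambda>i. c' i * X $$ (i, j)"] pick_image[OF fI] by simp
      also have "\<dots> = (\<Sum>r\<in>{..<card I}. c r * submatrix X I UNIV $$ (r, j))"
        using j X by (intro sum.cong refl, simp add: c'_def card_pick ent)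
      also have "\<dots> = 0" using z j X by simp
      finally show "(\<Sum>i\<in>I. c' i * X $$ (i, j)) = 0" .
    qed
    moreover have "rows_lin_indep X I" using rows_indep_inv[OF X Y XY] I by simp
    ultimately have "\<forall>i\<in>I. c' i = 0" unfolding rows_lin_indep_def by blast
    moreover have "pick I l \<in> I" using l pick_in_set by auto
    ultimately have "c' (pick I l) = 0" by blast
    then show "c l = 0" using l by (simp add: c'_def card_pick)
  qed
qed

lemma submatrix_submatrix_rows:
  "submatrix (submatrix X I UNIV) UNIV J = submatrix X I J"
proof (rule eq_matI)
  show "dim_row (submatrix (submatrix X I UNIV) UNIV J) = dim_row (submatrix X I J)"
    by (simp add: dim_submatrix)
  show "dim_col (submatrix (submatrix X I UNIV) UNIV J) = dim_col (submatrix X I J)"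
    by (simp add: dim_submatrix)
  fix i j assume i: "i < dim_row (submatrix X I J)" and j: "j < dim_col (submatrix X I J)"
  then have i': "i < card {i. i < dim_row X \<and> i \<in> I}" and j': "j < card {j. j < dim_col X \<and> j \<in> J}"
    by (simp_all add: dim_submatrix)
  have pj: "pick J j < dim_col X"
    using pick_le[of j "dim_col X" J] j' by (simp add: conj_commute)
  show "submatrix (submatrix X I UNIV) UNIV J $$ (i, j) = submatrix X I J $$ (i, j)"
    using i' j' pj by (simp add: submatrix_index dim_submatrix pick_UNIV)
qed

definition Qprop :: "rat mat \<Rightarrow> nat \<Rightarrow> bool" where
  "Qprop X n \<longleftrightarrow> (\<forall>I. I \<subseteq> {..<n} \<longrightarrow> (\<forall>J K. J \<subseteq> {..<n} \<and> K \<subseteq> {..<n} \<and>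
      card J = card I \<and> card K = card I \<and>
      det (submatrix X I J) \<noteq> 0 \<and> det (submatrix X I K) \<noteq> 0 \<longrightarrow>
      \<bar>det (submatrix X I J)\<bar> = \<bar>det (submatrix X I K)\<bar>))"

lemma te_iff:
  fixes X Y :: "rat mat"
  assumes X: "X \<in> carrier_mat n n" and Y: "Y \<in> carrier_mat n n" and XY: "X * Y = 1\<^sub>m n"
  shows "totally_equimodular X \<longleftrightarrow> Qprop X n"
proof -
  have dims: "dim_row (submatrix X I UNIV) = card I" "dim_col (submatrix X I UNIV) = n"
    if "I \<subseteq> {..<n}" for I
  proof -
    have "{i. i < dim_row X \<and> i \<in> I} = I" "{j. j < dim_col X \<and> j \<in> UNIV} = {..<n}" using X that by auto
    then show "dim_row (submatrix X I UNIV) = card I" "dim_col (submatrix X I UNIV) = n"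
      by (simp_all add: dim_submatrix)
  qed
  have "totally_equimodular X \<longleftrightarrow> (\<forall>I. I \<subseteq> {..<n} \<longrightarrow> equimodular (submatrix X I UNIV))"
    unfolding totally_equimodular_def using rows_indep_inv[OF X Y XY] by simp
  also have "\<dots> \<longleftrightarrow> Qprop X n"
  proof -
    have e: "equimodular (submatrix X I UNIV) \<longleftrightarrow> (\<forall>J K. J \<subseteq> {..<n} \<and> K \<subseteq> {..<n} \<and>
      card J = card I \<and> card K = card I \<and>
      det (submatrix X I J) \<noteq> 0 \<and> det (submatrix X I K) \<noteq> 0 \<longrightarrow>
      \<bar>det (submatrix X I J)\<bar> = \<bar>det (submatrix X I K)\<bar>)" if I: "I \<subseteq> {..<n}" for I
      unfolding equimodular_def dims[OF I] submatrix_submatrix_rows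
      using submatrix_rows_indep[OF X Y XY I] dims[OF I] by simp
    show ?thesis unfolding Qprop_def using e by simp
  qed
  finally show ?thesis .
qed

lemma sub_transpose:
  fixes B :: "rat mat"
  assumes B: "B \<in> carrier_mat n n" and I: "I \<subseteq> {..<n}" and J: "J \<subseteq> {..<n}" and c: "card I = card J"
  shows "det (submatrix (transpose_mat B) I J) = det (submatrix B J I)"
proof -
  have SI: "{i. i < n \<and> i \<in> I} = I" and SJ: "{i. i < n \<and> i \<in> J} = J" using I J by auto
  have d1: "dim_row (submatrix (transpose_mat B) I J) = card I" "dim_col (submatrix (transpose_mat B) I J) = card J"
    using B SI SJ unfolding dim_submatrix by simp_all
  have d2: "dim_row (submatrix B J I) = card J" "dim_col (submatrix B J I) = card I"
    using B SI SJ unfolding dim_submatrix by simp_all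
  have eq: "submatrix (transpose_mat B) I J = transpose_mat (submatrix B J I)"
  proof (rule eq_matI)
    fix i j assume i: "i < dim_row (transpose_mat (submatrix B J I))" and j: "j < dim_col (transpose_mat (submatrix B J I))"
    have i': "i < card I" and j': "j < card J" using i j d2 by simp_all
    have pi: "pick I i < n" using pick_in_set[of i I] i' I by auto
    have pj: "pick J j < n" using pick_in_set[of j J] j' J by auto
    have "submatrix (transpose_mat B) I J $$ (i, j) = transpose_mat B $$ (pick I i, pick J j)"
      by (rule submatrix_index, use i' j' B SI SJ in auto)
    also have "\<dots> = B $$ (pick J j, pick I i)" using pi pj B by simp
    also have "\<dots> = submatrix B J I $$ (j, i)"
      by (rule submatrix_index[symmetric], use i' j' B SI SJ in auto)
    also have "\<dots> = transpose_mat (submatrix B J I) $$ (i, j)" using i' j' d2 by simp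
    finally show "submatrix (transpose_mat B) I J $$ (i, j) = transpose_mat (submatrix B J I) $$ (i, j)" .
  next
    show "dim_row (submatrix (transpose_mat B) I J) = dim_row (transpose_mat (submatrix B J I))" using d1 d2 by simp
    show "dim_col (submatrix (transpose_mat B) I J) = dim_col (transpose_mat (submatrix B J I))" using d1 d2 by simp
  qed
  have "submatrix B J I \<in> carrier_mat (card J) (card J)"
    by (rule carrier_matI, use d2 c in presburger, use d2 c in presburger)
  then show ?thesis unfolding eq by (rule det_transpose)
qed

theorem mainTheorem2:
  fixes A B :: "rat mat" and n :: nat
  assumes "A \<in> carrier_mat n n" and "B \<in> carrier_mat n n"
    and "A * B = 1\<^sub>m n" and "B * A = 1\<^sub>m n"
  shows "totally_equimodular A \<longleftrightarrow> totally_equimodular (transpose_mat B)"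
proof -
  note A = assms(1) and B = assms(2) and AB = assms(3)
  have "det A * det B = 1" using det_mult[OF A B] AB by simp
  then have dA: "det A \<noteq> 0" by auto
  have BTc: "transpose_mat B \<in> carrier_mat n n" and ATc: "transpose_mat A \<in> carrier_mat n n" using A B by auto
  have BTAT: "transpose_mat B * transpose_mat A = 1\<^sub>m n"
    using transpose_mult[OF A B] AB by simp
  have jac: "\<bar>det (submatrix A I J)\<bar> = \<bar>det A\<bar> * \<bar>det (submatrix (transpose_mat B) ({..<n} - I) ({..<n} - J))\<bar>"
    if I: "I \<subseteq> {..<n}" and J: "J \<subseteq> {..<n}" and c: "card I = card J" for I J
  proof -
    have cc: "card ({..<n} - I) = card ({..<n} - J)" using card_compl[OF I] card_compl[OF J] c by simp
    show ?thesis using jacobi_abs[OF A B AB I J c] sub_transpose[OF B _ _ cc] by auto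
  qed
  have dc: "{..<n} - ({..<n} - X) = X" if "X \<subseteq> {..<n}" for X using that by auto
  have "Qprop A n \<longleftrightarrow> Qprop (transpose_mat B) n"
  proof
    assume QA: "Qprop A n"
    show "Qprop (transpose_mat B) n" unfolding Qprop_def
    proof (intro allI impI, elim conjE)
      fix I J K assume I: "I \<subseteq> {..<n}" and J: "J \<subseteq> {..<n}" and K: "K \<subseteq> {..<n}"
        and cJ: "card J = card I" and cK: "card K = card I"
        and nJ: "det (submatrix (transpose_mat B) I J) \<noteq> 0" and nK: "det (submatrix (transpose_mat B) I K) \<noteq> 0"
      let ?Ic = "{..<n} - I" and ?Jc = "{..<n} - J" and ?Kc = "{..<n} - K"
      have s: "?Ic \<subseteq> {..<n}" "?Jc \<subseteq> {..<n}" "?Kc \<subseteq> {..<n}" by auto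
      have c1: "card ?Ic = card ?Jc" "card ?Ic = card ?Kc"
        using card_compl[OF I] card_compl[OF J] card_compl[OF K] cJ cK by simp_all
      have j1: "\<bar>det (submatrix A ?Ic ?Jc)\<bar> = \<bar>det A\<bar> * \<bar>det (submatrix (transpose_mat B) I J)\<bar>"
        using jac[OF s(1) s(2) c1(1)] dc[OF I] dc[OF J] by simp
      have j2: "\<bar>det (submatrix A ?Ic ?Kc)\<bar> = \<bar>det A\<bar> * \<bar>det (submatrix (transpose_mat B) I K)\<bar>"
        using jac[OF s(1) s(3) c1(2)] dc[OF I] dc[OF K] by simp
      have n1: "det (submatrix A ?Ic ?Jc) \<noteq> 0" using j1 dA nJ by auto
      have n2: "det (submatrix A ?Ic ?Kc) \<noteq> 0" using j2 dA nK by auto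
      have "\<bar>det (submatrix A ?Ic ?Jc)\<bar> = \<bar>det (submatrix A ?Ic ?Kc)\<bar>"
        using QA s c1 n1 n2 unfolding Qprop_def by metis
      then show "\<bar>det (submatrix (transpose_mat B) I J)\<bar> = \<bar>det (submatrix (transpose_mat B) I K)\<bar>"
        using j1 j2 dA by simp
    qed
  next
    assume QB: "Qprop (transpose_mat B) n"
    show "Qprop A n" unfolding Qprop_def
    proof (intro allI impI, elim conjE)
      fix I J K assume I: "I \<subseteq> {..<n}" and J: "J \<subseteq> {..<n}" and K: "K \<subseteq> {..<n}"
        and cJ: "card J = card I" and cK: "card K = card I"
        and nJ: "det (submatrix A I J) \<noteq> 0" and nK: "det (submatrix A I K) \<noteq> 0"
      let ?Ic = "{..<n} - I" and ?Jc = "{..<n} - J" and ?Kc = "{..<n} - K"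
      have s: "?Ic \<subseteq> {..<n}" "?Jc \<subseteq> {..<n}" "?Kc \<subseteq> {..<n}" by auto
      have c1: "card ?Jc = card ?Ic" "card ?Kc = card ?Ic"
        using card_compl[OF I] card_compl[OF J] card_compl[OF K] cJ cK by simp_all
      have j1: "\<bar>det (submatrix A I J)\<bar> = \<bar>det A\<bar> * \<bar>det (submatrix (transpose_mat B) ?Ic ?Jc)\<bar>"
        using jac[OF I J cJ[symmetric]] .
      have j2: "\<bar>det (submatrix A I K)\<bar> = \<bar>det A\<bar> * \<bar>det (submatrix (transpose_mat B) ?Ic ?Kc)\<bar>"
        using jac[OF I K cK[symmetric]] .
      have n1: "det (submatrix (transpose_mat B) ?Ic ?Jc) \<noteq> 0" using j1 nJ by auto
      have n2: "det (submatrix (transpose_mat B) ?Ic ?Kc) \<noteq> 0" using j2 nK by auto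
      have "\<bar>det (submatrix (transpose_mat B) ?Ic ?Jc)\<bar> = \<bar>det (submatrix (transpose_mat B) ?Ic ?Kc)\<bar>"
        using QB s c1 n1 n2 unfolding Qprop_def by metis
      then show "\<bar>det (submatrix A I J)\<bar> = \<bar>det (submatrix A I K)\<bar>"
        using j1 j2 by simp
    qed
  qed
  then show ?thesis using te_iff[OF A B AB] te_iff[OF BTc ATc BTAT] by simp
qed

end
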